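(* Let $\mathbb{H}$ be the real quaternion algebra and $R=\mathbb{H}[t_1,\ldots,t_n]$ the ring of polynomials in $n$ central commuting variables over $\mathbb{H}$. Let $M$ be a two-sided ideal of $R$ which is maximal as a left ideal. Then there exist $a_1,\ldots,a_n\in\mathbb{R}$ such that $t_1-a_1,\ldots,t_n-a_n$ generate $M$. *)

theory Defs
  imports Complex_Main "HOL-Library.Poly_Mapping"
begin

datatype quat = Quat (Re: real) (Im1: real) (Im2: real) (Im3: real)

lemma quat_eqI: "Re x = Re y \<Longrightarrow> Im1 x = Im1 y \<Longrightarrow> Im2 x = Im2 y \<Longrightarrow> Im3 x = Im3 y \<Longrightarrow> x = y"
  by (cases x; cases y) simp

instantiation quat :: ring_1
begin
definition "0 = Quat 0 0 0 0"
definition "1 = Quat 1 0 0 0"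
definition "x + y = Quat (Re x + Re y) (Im1 x + Im1 y) (Im2 x + Im2 y) (Im3 x + Im3 y)"
definition "x - y = Quat (Re x - Re y) (Im1 x - Im1 y) (Im2 x - Im2 y) (Im3 x - Im3 y)"
definition "- x = Quat (- Re x) (- Im1 x) (- Im2 x) (- Im3 x)"
definition "x * y = Quat
   (Re x * Re y - Im1 x * Im1 y - Im2 x * Im2 y - Im3 x * Im3 y)
   (Re x * Im1 y + Im1 x * Re y + Im2 x * Im3 y - Im3 x * Im2 y)
   (Re x * Im2 y - Im1 x * Im3 y + Im2 x * Re y + Im3 x * Im1 y)
   (Re x * Im3 y + Im1 x * Im2 y - Im2 x * Im1 y + Im3 x * Re y)"
instance
  by standard (auto intro!: quat_eqI simp: zero_quat_def one_quat_def plus_quat_def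
      minus_quat_def uminus_quat_def times_quat_def algebra_simps)
end

definition quat_of_real :: "real \<Rightarrow> quat" where
  "quat_of_real r = Quat r 0 0 0"

text \<open>R = H[t_i | i :: 'n]: finitely supported functions from monomials
  (finitely supported exponent vectors) to quaternion coefficients, with the
  convolution product from Poly_Mapping; the variables commute with each other
  and with the coefficients.\<close>

type_synonym 'n qpoly = "('n \<Rightarrow>\<^sub>0 nat) \<Rightarrow>\<^sub>0 quat"

definition qvar :: "'n \<Rightarrow> 'n qpoly" where
  "qvar i = Poly_Mapping.single (Poly_Mapping.single i 1) 1"

definition qconst :: "quat \<Rightarrow> 'n qpoly" where
  "qconst c = Poly_Mapping.single 0 c"

definition left_ideal :: "'a::ring_1 set \<Rightarrow> bool" where
  "left_ideal I \<longleftrightarrow> 0 \<in> I \<and> (\<forall>x\<in>I. \<forall>y\<in>I. x + y \<in> I) \<and> (\<forall>r. \<forall>x\<in>I. r * x \<in> I)"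

definition two_sided_ideal :: "'a::ring_1 set \<Rightarrow> bool" where
  "two_sided_ideal I \<longleftrightarrow> left_ideal I \<and> (\<forall>r. \<forall>x\<in>I. x * r \<in> I)"

definition maximal_left_ideal :: "'a::ring_1 set \<Rightarrow> bool" where
  "maximal_left_ideal M \<longleftrightarrow> left_ideal M \<and> M \<noteq> UNIV \<and>
     (\<forall>J. left_ideal J \<and> M \<subseteq> J \<longrightarrow> J = M \<or> J = UNIV)"

definition left_ideal_gen :: "'a::ring_1 set \<Rightarrow> 'a set" where
  "left_ideal_gen S = left_ideal hull S"

end

theory Submission
  imports Defs "HOL-Analysis.Continuum_Not_Denumerable"
    "HOL-Computational_Algebra.Fundamental_Theorem_Algebra" "HOL-Library.FuncSet"
begin


lemma qconst_add: "qconst (a + b) = qconst a + qconst b"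
  by (simp add: qconst_def single_add)
lemma qconst_mult: "qconst (a * b) = qconst a * qconst b"
  by (simp add: qconst_def mult_single)
lemma qconst_one: "qconst 1 = 1"
  by (simp add: qconst_def)
lemma qconst_zero: "qconst 0 = 0"
  by (simp add: qconst_def)
lemma qconst_diff: "qconst (a - b) = qconst a - qconst b"
  by (simp add: qconst_def single_diff)
lemma qconst_eq_iff: "qconst a = qconst b \<longleftrightarrow> a = b"
  by (metis lookup_single_eq qconst_def)

lemma quat_of_real_add: "quat_of_real (a + b) = quat_of_real a + quat_of_real b"
  by (simp add: quat_of_real_def plus_quat_def)
lemma quat_of_real_mult: "quat_of_real (a * b) = quat_of_real a * quat_of_real b"
  by (simp add: quat_of_real_def times_quat_def)
lemma quat_of_real_one: "quat_of_real 1 = 1"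
  by (simp add: quat_of_real_def one_quat_def)
lemma quat_of_real_zero: "quat_of_real 0 = 0"
  by (simp add: quat_of_real_def zero_quat_def)
lemma quat_of_real_commute: "quat_of_real a * q = q * quat_of_real a"
  by (simp add: quat_of_real_def times_quat_def)
lemma quat_of_real_eq_iff: "quat_of_real a = quat_of_real b \<longleftrightarrow> a = b"
  by (simp add: quat_of_real_def)

lemma quat_inverse:
  assumes "(q::quat) \<noteq> 0"
  shows "\<exists>q'. q' * q = 1"
proof -
  define n where "n = Re q ^ 2 + Im1 q ^ 2 + Im2 q ^ 2 + Im3 q ^ 2"
  have "n \<noteq> 0"
  proof
    assume "n = 0"
    then have "Re q = 0 \<and> Im1 q = 0 \<and> Im2 q = 0 \<and> Im3 q = 0"
      unfolding n_def by (smt (verit) zero_le_power2 power2_eq_square mult_eq_0_iff)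
    then have "q = 0" by (intro quat_eqI) (simp_all add: zero_quat_def)
    with assms show False by simp
  qed
  show ?thesis
    apply (rule exI[of _ "Quat (Re q / n) (- Im1 q / n) (- Im2 q / n) (- Im3 q / n)"])
    apply (rule quat_eqI)
    using \<open>n \<noteq> 0\<close>
    apply (simp_all add: times_quat_def one_quat_def field_simps)
    apply (simp_all add: n_def power2_eq_square)
    done
qed

lemma poly_mapping_expand:
  fixes p :: "'a \<Rightarrow>\<^sub>0 'b::comm_monoid_add"
  shows "p = (\<Sum>k\<in>Poly_Mapping.keys p. Poly_Mapping.single k (Poly_Mapping.lookup p k))"
proof (rule poly_mapping_eqI)
  fix x
  have "Poly_Mapping.lookup (\<Sum>k\<in>Poly_Mapping.keys p. Poly_Mapping.single k (Poly_Mapping.lookup p k)) x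
      = (\<Sum>k\<in>Poly_Mapping.keys p. (if k = x then Poly_Mapping.lookup p k else 0))"
    by (simp add: Poly_Mapping.lookup_sum lookup_single when_def)
  also have "\<dots> = Poly_Mapping.lookup p x"
    by (cases "x \<in> Poly_Mapping.keys p") (auto simp: sum.delta' in_keys_iff)
  finally show "Poly_Mapping.lookup p x = Poly_Mapping.lookup (\<Sum>k\<in>Poly_Mapping.keys p. Poly_Mapping.single k (Poly_Mapping.lookup p k)) x" by simp
qed

lemma single_central:
  fixes p :: "('a::comm_monoid_add \<Rightarrow>\<^sub>0 'b::ring_1)"
  assumes "\<And>d. c * d = d * c"
  shows "Poly_Mapping.single m c * p = p * Poly_Mapping.single m c"
proof -
  have "Poly_Mapping.single m c * p = (\<Sum>k\<in>Poly_Mapping.keys p. Poly_Mapping.single m c * Poly_Mapping.single k (Poly_Mapping.lookup p k))"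
    by (subst poly_mapping_expand) (simp add: sum_distrib_left)
  also have "\<dots> = (\<Sum>k\<in>Poly_Mapping.keys p. Poly_Mapping.single k (Poly_Mapping.lookup p k) * Poly_Mapping.single m c)"
    by (simp add: mult_single assms add.commute)
  also have "\<dots> = p * Poly_Mapping.single m c"
    by (subst (2) poly_mapping_expand) (simp add: sum_distrib_right)
  finally show ?thesis .
qed

lemma qvar_central: "qvar i * p = p * qvar i"
  unfolding qvar_def by (rule single_central) simp

lemma real_central: "qconst (quat_of_real a) * p = p * qconst (quat_of_real a)"
  unfolding qconst_def by (rule single_central) (rule quat_of_real_commute)

lemma qconst_single: "qconst c * Poly_Mapping.single m d = Poly_Mapping.single m (c * d)"
  by (simp add: qconst_def mult_single)



lemma li_zero: "left_ideal I \<Longrightarrow> 0 \<in> I"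
  by (simp add: left_ideal_def)
lemma li_add: "left_ideal I \<Longrightarrow> x \<in> I \<Longrightarrow> y \<in> I \<Longrightarrow> x + y \<in> I"
  by (simp add: left_ideal_def)
lemma li_lmult: "left_ideal I \<Longrightarrow> x \<in> I \<Longrightarrow> r * x \<in> I"
  by (simp add: left_ideal_def)
lemma li_uminus: "left_ideal I \<Longrightarrow> x \<in> I \<Longrightarrow> - x \<in> I"
  using li_lmult[of I x "-1"] by simp
lemma li_diff: "left_ideal I \<Longrightarrow> x \<in> I \<Longrightarrow> y \<in> I \<Longrightarrow> x - y \<in> I"
  using li_add[of I x "-y"] li_uminus[of I y] by simp
lemma li_sum: "left_ideal I \<Longrightarrow> (\<And>x. x \<in> A \<Longrightarrow> f x \<in> I) \<Longrightarrow> sum f A \<in> I"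
  by (induction A rule: infinite_finite_induct) (auto simp: li_zero li_add)
lemma tsi_rmult: "two_sided_ideal I \<Longrightarrow> x \<in> I \<Longrightarrow> x * r \<in> I"
  by (simp add: two_sided_ideal_def)

locale maxM =
  fixes M :: "'a::ring_1 set"
  assumes tsi: "two_sided_ideal M" and mli: "maximal_left_ideal M"
begin

lemma li: "left_ideal M"
  using tsi two_sided_ideal_def by blast

lemma one_notin: "1 \<notin> M"
proof
  assume "1 \<in> M"
  then have "\<forall>r. r \<in> M" using li_lmult[OF li, of 1] by simp
  then show False using mli maximal_left_ideal_def by blast
qed

lemma linv:
  assumes "p \<notin> M"
  shows "\<exists>r. r * p - 1 \<in> M"
proof -
  define J where "J = {m + r * p | m r. m \<in> M}"
  have "left_ideal J"
    unfolding left_ideal_def J_def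
  proof (intro conjI ballI allI)
    show "0 \<in> {m + r * p |m r. m \<in> M}"
      using li_zero[OF li] by (auto intro!: exI[of _ 0])
  next
    fix x y assume "x \<in> {m + r * p |m r. m \<in> M}" "y \<in> {m + r * p |m r. m \<in> M}"
    then obtain m1 r1 m2 r2 where "x = m1 + r1 * p" "m1 \<in> M" "y = m2 + r2 * p" "m2 \<in> M" by blast
    then have "x + y = (m1 + m2) + (r1 + r2) * p" "m1 + m2 \<in> M"
      by (auto simp: li_add[OF li] algebra_simps)
    then show "x + y \<in> {m + r * p |m r. m \<in> M}" by blast
  next
    fix s x assume "x \<in> {m + r * p |m r. m \<in> M}"
    then obtain m1 r1 where "x = m1 + r1 * p" "m1 \<in> M" by blast
    then have "s * x = (s * m1) + (s * r1) * p" "s * m1 \<in> M"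
      by (auto simp: li_lmult[OF li] algebra_simps)
    then show "s * x \<in> {m + r * p |m r. m \<in> M}" by blast
  qed
  moreover have "M \<subseteq> J"
  proof
    fix x assume "x \<in> M" then have "x = x + 0 * p \<and> x \<in> M" by simp
    then show "x \<in> J" unfolding J_def by blast
  qed
  moreover have "p \<in> J"
  proof -
    have "p = 0 + 1 * p \<and> (0::'a) \<in> M" using li_zero[OF li] by simp
    then show ?thesis unfolding J_def by blast
  qed
  ultimately have "J = UNIV" using mli assms unfolding maximal_left_ideal_def by blast
  then obtain m r where "1 = m + r * p" "m \<in> M" unfolding J_def by blast
  then have "r * p - 1 = - m" by (simp add: algebra_simps)
  with \<open>m \<in> M\<close> show ?thesis using li_uminus[OF li] by metis
qed

lemma prime:
  assumes "u * v \<in> M" "u \<notin> M"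
  shows "v \<in> M"
proof -
  obtain r where r: "r * u - 1 \<in> M" using linv assms(2) by blast
  have "(r * u - 1) * v \<in> M" using tsi_rmult[OF tsi r] .
  moreover have "r * (u * v) \<in> M" using li_lmult[OF li assms(1)] .
  ultimately have "r * (u * v) - (r * u - 1) * v \<in> M" using li_diff[OF li] by blast
  then show ?thesis by (simp add: algebra_simps)
qed

end



definition sc :: "real \<Rightarrow> 'n qpoly" where
  "sc a = qconst (quat_of_real a)"

lemma sc_add: "sc (a + b) = sc a + sc b"
  by (simp add: sc_def quat_of_real_add qconst_add)
lemma sc_mult: "sc (a * b) = sc a * sc b"
  by (simp add: sc_def quat_of_real_mult qconst_mult)
lemma sc_diff: "sc (a - b) = sc a - sc b"
  by (metis sc_add diff_add_cancel add_diff_cancel_right')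
lemma sc_one [simp]: "sc 1 = 1"
  by (simp add: sc_def quat_of_real_one qconst_one)
lemma sc_zero [simp]: "sc 0 = 0"
  by (simp add: sc_def quat_of_real_zero qconst_zero)
lemma sc_central: "sc a * p = p * sc a"
  by (simp add: sc_def real_central)
lemma sc_uminus: "sc (- a) = - sc a"
  using sc_diff[of 0 a] by simp

definition phi :: "'n qpoly \<Rightarrow> real poly \<Rightarrow> 'n qpoly" where
  "phi x q = fold_coeffs (\<lambda>a r. sc a + x * r) q 0"

lemma phi_0 [simp]: "phi x 0 = 0"
  by (simp add: phi_def)

lemma phi_pCons [simp]: "phi x (pCons a p) = sc a + x * phi x p"
  by (cases "p = 0 \<and> a = 0") (auto simp: phi_def)

lemma phi_const [simp]: "phi x [:c:] = sc c"
  by simp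

lemma phi_add [simp]: "phi x (p + q) = phi x p + phi x q"
proof (induction p arbitrary: q)
  case (pCons a p)
  then show ?case
    by (cases q) (simp add: algebra_simps sc_add)
qed simp

lemma phi_smult [simp]: "phi x (smult a p) = sc a * phi x p"
proof (induction p)
  case (pCons b p)
  then show ?case
    by (simp add: algebra_simps sc_mult; metis sc_central mult.assoc)
qed simp

lemma phi_mult:
  assumes cx: "\<And>y. x * y = y * x"
  shows "phi x (p * q) = phi x p * phi x q"
proof (induction p)
  case (pCons a p)
  then show ?case
    by (simp add: algebra_simps; metis cx mult.assoc)
qed simp

lemma phi_central:
  assumes cx: "\<And>y. x * y = y * x"
  shows "phi x p * y = y * phi x p"
proof (induction p)
  case (pCons a p)
  then show ?case
    by (simp add: algebra_simps sc_central; metis cx mult.assoc)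
qed simp

lemma phi_sum: "phi x (sum f A) = (\<Sum>a\<in>A. phi x (f a))"
  by (induction A rule: infinite_finite_induct) auto

lemma phi_linear: "phi x [:-r, 1:] = x - sc r"
  by (simp add: sc_uminus)



lemma nonzero_const:
  fixes M :: "'n qpoly set"
  assumes "maxM M" "q \<noteq> 0"
  shows "qconst q \<notin> M"
proof
  assume "qconst q \<in> M"
  obtain q' where "q' * q = 1" using quat_inverse assms(2) by blast
  then have "qconst q' * qconst q = (1::'n qpoly)" by (metis qconst_mult qconst_one)
  then have "1 \<in> M" using li_lmult[OF maxM.li[OF assms(1)] \<open>qconst q \<in> M\<close>, of "qconst q'"] by simp
  then show False using maxM.one_notin[OF assms(1)] by simp
qed

lemma central_root:
  fixes M :: "'n qpoly set"
  assumes "maxM M" "\<And>y. x * y = y * x" "x - qconst \<delta> \<in> M"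
  shows "\<delta> * e = e * \<delta>"
proof (rule ccontr)
  assume ne: "\<delta> * e \<noteq> e * \<delta>"
  have li: "left_ideal M" using maxM.li[OF assms(1)] .
  have "(x - qconst \<delta>) * qconst e \<in> M" using tsi_rmult[OF maxM.tsi[OF assms(1)] assms(3)] .
  moreover have "qconst e * (x - qconst \<delta>) \<in> M" using li_lmult[OF li assms(3)] .
  ultimately have "(x - qconst \<delta>) * qconst e - qconst e * (x - qconst \<delta>) \<in> M"
    using li_diff[OF li] by blast
  moreover have "(x - qconst \<delta>) * qconst e - qconst e * (x - qconst \<delta>) = qconst (e * \<delta> - \<delta> * e)"
    by (simp add: algebra_simps qconst_diff qconst_mult assms(2))
  moreover have "e * \<delta> - \<delta> * e \<noteq> 0" using ne by simp
  ultimately show False using nonzero_const[OF assms(1)] by metis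
qed

lemma map_poly_of_real_mult:
  "map_poly (of_real :: real \<Rightarrow> complex) (p * q) = map_poly of_real p * map_poly of_real q"
  by (rule poly_eqI) (simp add: coeff_map_poly coeff_mult of_real_sum)

lemma map_poly_of_real_add:
  "map_poly (of_real :: real \<Rightarrow> complex) (p + q) = map_poly of_real p + map_poly of_real q"
  by (rule poly_eqI) (simp add: coeff_map_poly)

lemma poly_map_of_real: "poly (map_poly of_real p) (of_real x :: complex) = of_real (poly p x)"
  by (induction p) (auto simp: map_poly_pCons)

lemma deg1_poly: "degree (r::real poly) \<le> 1 \<Longrightarrow> r = [:coeff r 0, coeff r 1:]"
proof (rule poly_eqI)
  fix n assume "degree r \<le> 1"
  then show "coeff r n = coeff [:coeff r 0, coeff r 1:] n"
    by (cases n; cases "n - 1") (auto simp: coeff_eq_0 coeff_pCons)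
qed



lemma quad_factor:
  fixes M :: "'n qpoly set"
  assumes mM: "maxM M" and cx: "\<And>y. x * y = y * x"
    and b: "\<beta> \<noteq> 0"
    and inM: "phi x [:\<alpha>^2 + \<beta>^2, -2*\<alpha>, 1:] \<in> M"
  shows False
proof -
  define d1 where "d1 = Quat \<alpha> \<beta> 0 0"
  define d2 where "d2 = Quat \<alpha> (-\<beta>) 0 0"
  have s: "d1 + d2 = quat_of_real (2*\<alpha>)"
    by (rule quat_eqI) (simp_all add: d1_def d2_def plus_quat_def quat_of_real_def)
  have p: "d1 * d2 = quat_of_real (\<alpha>^2 + \<beta>^2)"
    by (rule quat_eqI) (simp_all add: d1_def d2_def times_quat_def quat_of_real_def power2_eq_square)
  have "phi x [:\<alpha>^2 + \<beta>^2, -2*\<alpha>, 1:] = sc (\<alpha>^2 + \<beta>^2) - x * sc (2*\<alpha>) + x * x"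
    by (simp add: sc_uminus algebra_simps)
  also have "\<dots> = (x - qconst d1) * (x - qconst d2)"
  proof -
    have "(x - qconst d1) * (x - qconst d2) = x * x - x * (qconst d1 + qconst d2) + qconst d1 * qconst d2"
      by (simp add: algebra_simps cx[of "qconst d1"])
    also have "\<dots> = x * x - x * sc (2*\<alpha>) + sc (\<alpha>^2 + \<beta>^2)"
      by (simp add: qconst_add[symmetric] qconst_mult[symmetric] s p sc_def)
    finally show ?thesis by (simp add: algebra_simps)
  qed
  finally have "(x - qconst d1) * (x - qconst d2) \<in> M" using inM by simp
  then have "x - qconst d1 \<in> M \<or> x - qconst d2 \<in> M" using maxM.prime[OF mM] by blast
  then have "d1 * Quat 0 0 1 0 = Quat 0 0 1 0 * d1 \<or> d2 * Quat 0 0 1 0 = Quat 0 0 1 0 * d2"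
    using central_root[OF mM cx] by blast
  then show False using b
    by (auto simp: d1_def d2_def times_quat_def)
qed

lemma root_step:
  fixes M :: "'n qpoly set"
  assumes mM: "maxM M" and cx: "\<And>y. x * y = y * x"
  shows "q \<noteq> 0 \<Longrightarrow> phi x q \<in> M \<Longrightarrow> \<exists>a. x - sc a \<in> M"
proof (induction "degree q" arbitrary: q rule: less_induct)
  case less
  show ?case
  proof (cases "degree q = 0")
    case True
    then obtain c where q: "q = [:c:]" using degree0_coeffs by blast
    with less.prems have "c \<noteq> 0" by simp
    then have "quat_of_real c \<noteq> 0" by (metis quat_of_real_eq_iff quat_of_real_zero)
    moreover have "qconst (quat_of_real c) \<in> M" using less.prems q by (simp add: sc_def)
    ultimately show ?thesis using nonzero_const[OF mM] by blast
  next
    case False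
    define cq where "cq = map_poly (of_real :: real \<Rightarrow> complex) q"
    have "degree cq = degree q" unfolding cq_def by (rule degree_map_poly) simp
    then have "\<not> constant (poly cq)" using False constant_degree by metis
    then obtain z where z: "poly cq z = 0" using fundamental_theorem_of_algebra by blast
    have IH: "phi x s \<notin> M" if "s \<noteq> 0" "degree s < degree q" "\<nexists>a. x - sc a \<in> M" for s
      using less.hyps that by blast
    show ?thesis
    proof (rule ccontr)
      assume nex: "\<nexists>a. x - sc a \<in> M"
      show False
      proof (cases "Complex.Im z = 0")
        case True
        define a where "a = Complex.Re z"
        have "z = of_real a" using True by (simp add: a_def complex_eq_iff)
        then have "poly q a = 0" using z poly_map_of_real[of q a] by (simp add: cq_def)
        then obtain s where qs: "q = [:-a, 1:] * s" using poly_eq_0_iff_dvd by (metis dvdE)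
        then have "s \<noteq> 0" using less.prems by auto
        have "degree ([:-a, 1:] * s) = degree [:-a, 1:] + degree s"
          by (rule degree_mult_eq) (simp_all add: \<open>s \<noteq> 0\<close>)
        then have "degree q = 1 + degree s" using qs by simp
        then have "phi x s \<notin> M" using IH[OF \<open>s \<noteq> 0\<close> _ nex] by simp
        moreover have "phi x q = phi x s * (x - sc a)"
        proof -
          have "phi x q = phi x [:-a, 1:] * phi x s" unfolding qs by (rule phi_mult[OF cx])
          also have "\<dots> = (x - sc a) * phi x s" by (simp only: phi_linear)
          also have "\<dots> = phi x s * (x - sc a)" by (rule phi_central[OF cx, symmetric])
          finally show ?thesis .
        qed
        ultimately have "x - sc a \<in> M" using maxM.prime[OF mM] less.prems by metis
        then show False using nex by blast
      next
        case False
        define \<alpha> where "\<alpha> = Complex.Re z"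
        define \<beta> where "\<beta> = Complex.Im z"
        define Q :: "real poly" where "Q = [:\<alpha>^2 + \<beta>^2, -2*\<alpha>, 1:]"
        have "Q \<noteq> 0" by (simp add: Q_def)
        have zQ: "poly (map_poly of_real Q) z = 0"
          by (simp add: Q_def map_poly_pCons complex_eq_iff \<alpha>_def \<beta>_def power2_eq_square algebra_simps)
        define r where "r = q mod Q"
        define s where "s = q div Q"
        have qsr: "q = s * Q + r" by (simp add: r_def s_def)
        have "poly (map_poly of_real r) z = 0"
          using z zQ arg_cong[OF qsr, of "\<lambda>p. poly (map_poly of_real p) z"]
          by (simp add: cq_def map_poly_of_real_mult map_poly_of_real_add)
        moreover have "degree r \<le> 1"
        proof -
          have "r = 0 \<or> degree r < degree Q" using degree_mod_less[OF \<open>Q \<noteq> 0\<close>] r_def by blast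
          then show ?thesis by (auto simp: Q_def)
        qed
        moreover have "poly (map_poly of_real [:coeff r 0, coeff r 1:]) z = of_real (coeff r 0) + z * of_real (coeff r 1)"
          by (simp add: map_poly_pCons)
        ultimately have "of_real (coeff r 0) + z * of_real (coeff r 1) = 0"
          using deg1_poly[of r] by simp
        then have "coeff r 1 * \<beta> = 0" "coeff r 0 + \<alpha> * coeff r 1 = 0"
          by (auto simp: complex_eq_iff \<alpha>_def \<beta>_def)
        then have "coeff r 1 = 0" "coeff r 0 = 0" using False \<beta>_def by auto
        then have "r = 0" using deg1_poly[OF \<open>degree r \<le> 1\<close>] by simp
        then have qs: "q = s * Q" using qsr by simp
        then have "s \<noteq> 0" using less.prems by auto
        have "degree (s * Q) = degree s + degree Q"
          by (rule degree_mult_eq) (simp_all add: \<open>s \<noteq> 0\<close> \<open>Q \<noteq> 0\<close>)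
        moreover have "degree Q = 2" by (simp add: Q_def)
        ultimately have "degree q = degree s + 2" using qs by simp
        then have "phi x s \<notin> M" using IH[OF \<open>s \<noteq> 0\<close> _ nex] by simp
        moreover have "phi x q = phi x s * phi x Q"
          using qs by (simp add: phi_mult[OF cx])
        ultimately have "phi x Q \<in> M" using maxM.prime[OF mM] less.prems by metis
        then show False using quad_factor[OF mM cx _, of \<beta> \<alpha>] False \<beta>_def Q_def by simp
      qed
    qed
  qed
qed



definition qscale :: "real \<Rightarrow> 'n qpoly \<Rightarrow> 'n qpoly" where
  "qscale c p = sc c * p"

interpretation qvs: vector_space "qscale :: real \<Rightarrow> 'n qpoly \<Rightarrow> 'n qpoly"
  by unfold_locales (simp_all add: qscale_def algebra_simps sc_add sc_mult)

lemma single_decomp: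
  "(Poly_Mapping.single k q :: 'n qpoly) =
     qscale (quat.Re q) (Poly_Mapping.single k 1) + qscale (Im1 q) (Poly_Mapping.single k (Quat 0 1 0 0))
   + qscale (Im2 q) (Poly_Mapping.single k (Quat 0 0 1 0)) + qscale (Im3 q) (Poly_Mapping.single k (Quat 0 0 0 1))"
proof -
  have "q = quat_of_real (quat.Re q) * 1 + quat_of_real (Im1 q) * Quat 0 1 0 0
      + quat_of_real (Im2 q) * Quat 0 0 1 0 + quat_of_real (Im3 q) * Quat 0 0 0 1"
    by (rule quat_eqI) (simp_all add: quat_of_real_def times_quat_def plus_quat_def one_quat_def)
  then show ?thesis
    by (simp add: qscale_def sc_def qconst_single single_add[symmetric] del: mult_1_right)
qed

lemma span_W:
  fixes p :: "'n qpoly"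
  assumes "Poly_Mapping.keys p \<subseteq> K"
  shows "p \<in> qvs.span ((\<lambda>(m, e). Poly_Mapping.single m e) ` (K \<times> {1, Quat 0 1 0 0, Quat 0 0 1 0, Quat 0 0 0 1}))"
    (is "_ \<in> qvs.span ?W")
proof -
  have "Poly_Mapping.single k q \<in> qvs.span ?W" if "k \<in> K" for k q
  proof -
    have b: "Poly_Mapping.single k e \<in> qvs.span ?W" if "e \<in> {1, Quat 0 1 0 0, Quat 0 0 1 0, Quat 0 0 0 1}" for e
      by (rule qvs.span_base) (use \<open>k \<in> K\<close> that in auto)
    show ?thesis
      by (subst single_decomp) (intro qvs.span_add qvs.span_scale b; simp)
  qed
  then have "(\<Sum>k\<in>Poly_Mapping.keys p. Poly_Mapping.single k (Poly_Mapping.lookup p k)) \<in> qvs.span ?W"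
    using assms by (intro qvs.span_sum) auto
  then show ?thesis using poly_mapping_expand[of p] by simp
qed



lemma finite_Mon: "finite {m :: ('n::finite) \<Rightarrow>\<^sub>0 nat. \<forall>i. Poly_Mapping.lookup m i \<le> d}"
proof -
  have "finite (Pi UNIV (\<lambda>_::'n. {..d}))"
  proof -
    have "finite (PiE (UNIV::'n set) (\<lambda>_. {..d}))" by (rule finite_PiE) simp_all
    then show ?thesis by (simp only: PiE_UNIV_domain)
  qed
  moreover have "inj (Poly_Mapping.lookup :: ('n \<Rightarrow>\<^sub>0 nat) \<Rightarrow> _)"
    by (meson injI poly_mapping_eq_iff)
  ultimately have "finite (Poly_Mapping.lookup -` Pi UNIV (\<lambda>_::'n. {..d}))"
    using finite_vimageI by blast
  moreover have "{m :: 'n \<Rightarrow>\<^sub>0 nat. \<forall>i. Poly_Mapping.lookup m i \<le> d} = Poly_Mapping.lookup -` Pi UNIV (\<lambda>_::'n. {..d})"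
    unfolding vimage_def Pi_def by blast
  ultimately show ?thesis by metis
qed

lemma keys_bounded:
  fixes p :: "('n::finite) qpoly"
  shows "\<exists>d. Poly_Mapping.keys p \<subseteq> {m. \<forall>i. Poly_Mapping.lookup m i \<le> d}"
proof -
  define d where "d = Max (insert 0 ((\<lambda>(m, i). Poly_Mapping.lookup m i) ` (Poly_Mapping.keys p \<times> UNIV)))"
  have "Poly_Mapping.lookup m i \<le> d" if "m \<in> Poly_Mapping.keys p" for m i
  proof -
    have "finite (Poly_Mapping.keys p \<times> (UNIV :: 'n set))" by simp
    then have "finite (insert 0 ((\<lambda>(m, i). Poly_Mapping.lookup m i) ` (Poly_Mapping.keys p \<times> UNIV)))"
      by blast
    moreover have "Poly_Mapping.lookup m i \<in> insert 0 ((\<lambda>(m, i). Poly_Mapping.lookup m i) ` (Poly_Mapping.keys p \<times> UNIV))"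
      using that by force
    ultimately show ?thesis unfolding d_def by (rule Max_ge)
  qed
  then show ?thesis by blast
qed

lemma algebraic:
  fixes M :: "('n::finite) qpoly set"
  assumes mM: "maxM M" and cx: "\<And>y. x * y = y * x"
  shows "\<exists>q. q \<noteq> 0 \<and> phi x q \<in> M"
proof (rule ccontr)
  assume H: "\<nexists>q. q \<noteq> 0 \<and> phi x q \<in> M"
  have li: "left_ideal M" using maxM.li[OF mM] .
  have "x - sc r \<notin> M" for r
  proof
    assume "x - sc r \<in> M"
    then have "phi x [:-r, 1:] \<in> M" by (simp only: phi_linear)
    moreover have "[:-r, 1:] \<noteq> (0::real poly)" by simp
    ultimately show False using H by blast
  qed
  then have "\<forall>r. \<exists>v. v * (x - sc r) - 1 \<in> M" using maxM.linv[OF mM] by blast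
  then obtain u where u: "\<And>r. u r * (x - sc r) - 1 \<in> M" by metis
  have sc_notin: "sc c \<notin> M" if "c \<noteq> 0" for c
    using nonzero_const[OF mM, of "quat_of_real c"] that
    by (metis quat_of_real_eq_iff quat_of_real_zero sc_def)
  have inj: "inj u"
  proof (rule injI)
    fix r s assume eq: "u r = u s"
    show "r = s"
    proof (rule ccontr)
      assume "r \<noteq> s"
      have "u r * (x - sc r) - 1 - (u r * (x - sc s) - 1) \<in> M"
        using u[of r] u[of s] eq li_diff[OF li] by metis
      moreover have "u r * (x - sc r) - 1 - (u r * (x - sc s) - 1) = sc (s - r) * u r"
        by (simp add: algebra_simps sc_diff sc_central)
      ultimately have "sc (s - r) * u r \<in> M" by simp
      moreover have "sc (s - r) \<notin> M" using sc_notin \<open>r \<noteq> s\<close> by simp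
      ultimately have "u r \<in> M" using maxM.prime[OF mM] by blast
      then have "u r * (x - sc r) \<in> M" using tsi_rmult[OF maxM.tsi[OF mM]] by blast
      then have "u r * (x - sc r) - (u r * (x - sc r) - 1) \<in> M" using u[of r] li_diff[OF li] by blast
      then show False using maxM.one_notin[OF mM] by simp
    qed
  qed
  define Mon where "Mon d = {m :: 'n \<Rightarrow>\<^sub>0 nat. \<forall>i. Poly_Mapping.lookup m i \<le> d}" for d
  define A where "A d = {r. Poly_Mapping.keys (u r) \<subseteq> Mon d}" for d
  have U: "UNIV = (\<Union>d. A d)" using keys_bounded unfolding A_def Mon_def by blast
  have "\<exists>d. uncountable (A d)"
  proof (rule ccontr)
    assume "\<nexists>d. uncountable (A d)"
    then have "countable (\<Union>d. A d)" by (intro countable_UN) auto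
    then show False using U uncountable_UNIV_real by simp
  qed
  then obtain d where "uncountable (A d)" by blast
  then have "infinite (A d)" using countable_finite by blast
  define W :: "'n qpoly set" where "W = (\<lambda>(m, e). Poly_Mapping.single m e) ` (Mon d \<times> {1, Quat 0 1 0 0, Quat 0 0 1 0, Quat 0 0 0 1})"
  have finW: "finite W" unfolding W_def Mon_def using finite_Mon by blast
  obtain T0 where T0: "finite T0" "card T0 = Suc (card W)" "T0 \<subseteq> A d"
    using infinite_arbitrarily_large \<open>infinite (A d)\<close> by blast
  define S where "S = u ` T0"
  have injT: "inj_on u T0" using inj by (meson inj_on_subset subset_UNIV)
  have finS: "finite S" using T0(1) S_def by simp
  have cardS: "card S = Suc (card W)" using T0 injT card_image S_def by metis
  have "S \<subseteq> qvs.span W" unfolding S_def W_def using T0(3) span_W unfolding A_def Mon_def by blast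
  then have "\<not> qvs.independent S" using qvs.independent_span_bound[OF finW] cardS by fastforce
  then obtain c where c: "\<exists>v\<in>S. c v \<noteq> 0" "(\<Sum>v\<in>S. qscale (c v) v) = 0"
    using qvs.dependent_finite[OF finS] by blast
  define cr where "cr r = c (u r)" for r
  have sum0: "(\<Sum>r\<in>T0. sc (cr r) * u r) = 0"
    using c(2) unfolding S_def sum.reindex[OF injT] by (simp add: cr_def qscale_def)
  obtain r0 where r0: "r0 \<in> T0" "cr r0 \<noteq> 0" using c(1) S_def cr_def by auto
  define L where "L r = [:-r, 1:]" for r :: real
  define P where "P = (\<Prod>s\<in>T0. L s)"
  define Pr where "Pr r = (\<Prod>s\<in>T0-{r}. L s)" for r
  define Q0 where "Q0 = (\<Sum>r\<in>T0. smult (cr r) (Pr r))"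
  have PPr: "P = L r * Pr r" if "r \<in> T0" for r
    using prod.remove[OF T0(1) that] P_def Pr_def by simp
  have "Q0 \<noteq> 0"
  proof
    assume "Q0 = 0"
    have "poly Q0 r0 = (\<Sum>r\<in>T0. cr r * (\<Prod>s\<in>T0-{r}. poly (L s) r0))"
      by (simp add: Q0_def Pr_def poly_sum poly_prod)
    also have "\<dots> = cr r0 * (\<Prod>s\<in>T0-{r0}. poly (L s) r0)"
    proof -
      have "(\<Sum>r\<in>T0-{r0}. cr r * (\<Prod>s\<in>T0-{r}. poly (L s) r0)) = 0"
      proof (rule sum.neutral, rule ballI)
        fix r assume "r \<in> T0 - {r0}"
        then have "r0 \<in> T0 - {r}" using r0 by auto
        moreover have "poly (L r0) r0 = 0" by (simp add: L_def)
        ultimately have "(\<Prod>s\<in>T0-{r}. poly (L s) r0) = 0" using T0(1) by (meson finite_Diff prod_zero)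
        then show "cr r * (\<Prod>s\<in>T0-{r}. poly (L s) r0) = 0" by simp
      qed
      then show ?thesis
        using sum.remove[OF T0(1) r0(1), of "\<lambda>r. cr r * (\<Prod>s\<in>T0-{r}. poly (L s) r0)"] by simp
    qed
    finally have "poly Q0 r0 = cr r0 * (\<Prod>s\<in>T0-{r0}. poly (L s) r0)" .
    moreover have "(\<Prod>s\<in>T0-{r0}. poly (L s) r0) \<noteq> 0"
      using T0(1) by (simp add: L_def)
    ultimately show False using \<open>Q0 = 0\<close> r0(2) by simp
  qed
  have "phi x Q0 \<in> M"
  proof -
    have E: "sc (cr r) * (u r * phi x P) - sc (cr r) * phi x (Pr r) \<in> M" if "r \<in> T0" for r
    proof -
      have eqP: "phi x P = (x - sc r) * phi x (Pr r)"
        using PPr[OF that] phi_mult[OF cx, of "L r" "Pr r"] phi_linear[of x r] L_def by simp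
      have "sc (cr r) * (u r * phi x P) - sc (cr r) * phi x (Pr r)
          = sc (cr r) * ((u r * (x - sc r) - 1) * phi x (Pr r))"
        unfolding eqP by (simp add: algebra_simps)
      also have "\<dots> \<in> M"
        using u[of r] tsi_rmult[OF maxM.tsi[OF mM]] li_lmult[OF li] by blast
      finally show ?thesis .
    qed
    then have "(\<Sum>r\<in>T0. sc (cr r) * (u r * phi x P) - sc (cr r) * phi x (Pr r)) \<in> M"
      by (intro li_sum[OF li])
    moreover have "(\<Sum>r\<in>T0. sc (cr r) * (u r * phi x P) - sc (cr r) * phi x (Pr r))
        = (\<Sum>r\<in>T0. sc (cr r) * u r) * phi x P - phi x Q0"
      by (simp add: sum_subtractf sum_distrib_right mult.assoc Q0_def phi_sum)
    ultimately have "- phi x Q0 \<in> M" using sum0 by simp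
    then show ?thesis using li_uminus[OF li] by force
  qed
  with H \<open>Q0 \<noteq> 0\<close> show False by blast
qed



lemma left_ideal_Inter: "(\<And>I. I \<in> T \<Longrightarrow> left_ideal I) \<Longrightarrow> left_ideal (\<Inter>T)"
  unfolding left_ideal_def by blast

lemma left_ideal_gen_li: "left_ideal (left_ideal_gen S)"
  unfolding left_ideal_gen_def by (rule hull_in) (rule left_ideal_Inter, blast)

lemma qconst_sum: "qconst (sum f A) = (\<Sum>x\<in>A. qconst (f x))"
  by (induction A rule: infinite_finite_induct) (auto simp: qconst_add qconst_zero)

lemma mon_minus:
  assumes "Poly_Mapping.lookup m i > 0"
  shows "m = (m - Poly_Mapping.single i 1) + Poly_Mapping.single i (1::nat)"
  by (rule poly_mapping_eqI) (use assms in \<open>auto simp: lookup_add lookup_minus lookup_single when_def\<close>)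

lemma mon_in_J:
  fixes a :: "('n::finite) \<Rightarrow> real"
  defines "J \<equiv> left_ideal_gen (range (\<lambda>i. qvar i - qconst (quat_of_real (a i))))"
  shows "Poly_Mapping.single m 1 - qconst (quat_of_real (\<Prod>i\<in>UNIV. a i ^ Poly_Mapping.lookup m i)) \<in> J"
proof (induction "\<Sum>i\<in>UNIV. Poly_Mapping.lookup m i" arbitrary: m rule: less_induct)
  case less
  have liJ: "left_ideal J" unfolding J_def by (rule left_ideal_gen_li)
  show ?case
  proof (cases "m = 0")
    case True
    then show ?thesis using li_zero[OF liJ]
      by (simp add: quat_of_real_one qconst_one)
  next
    case False
    then obtain i where i: "Poly_Mapping.lookup m i > 0"
      by (metis gr0I lookup_zero poly_mapping_eqI)
    define m' where "m' = m - Poly_Mapping.single i 1"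
    have mm: "m = m' + Poly_Mapping.single i 1" using mon_minus[OF i] m'_def by simp
    have lk: "Poly_Mapping.lookup m j = Poly_Mapping.lookup m' j + (if j = i then 1 else 0)" for j
      by (subst mm) (simp add: lookup_add lookup_single when_def)
    have "(\<Sum>j\<in>UNIV. Poly_Mapping.lookup m j) = (\<Sum>j\<in>UNIV. Poly_Mapping.lookup m' j) + 1"
      by (simp add: lk sum.distrib)
    then have IH: "Poly_Mapping.single m' 1 - qconst (quat_of_real (\<Prod>j\<in>UNIV. a j ^ Poly_Mapping.lookup m' j)) \<in> J"
      using less by simp
    define A' where "A' = (\<Prod>j\<in>UNIV. a j ^ Poly_Mapping.lookup m' j)"
    have prodm: "(\<Prod>j\<in>UNIV. a j ^ Poly_Mapping.lookup m j) = a i * A'"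
    proof -
      have "(\<Prod>j\<in>UNIV. a j ^ Poly_Mapping.lookup m j) = (\<Prod>j\<in>UNIV. a j ^ Poly_Mapping.lookup m' j * (if j = i then a i else 1))"
        by (rule prod.cong) (auto simp: lk power_add)
      also have "\<dots> = A' * a i" by (simp add: prod.distrib A'_def)
      finally show ?thesis by simp
    qed
    have sm: "Poly_Mapping.single m (1::quat) = Poly_Mapping.single m' 1 * qvar i"
      by (simp add: qvar_def mult_single mm)
    have gen: "qvar i - sc (a i) \<in> J"
      unfolding J_def left_ideal_gen_def sc_def by (rule hull_inc) simp
    have "Poly_Mapping.single m 1 - qconst (quat_of_real (\<Prod>j\<in>UNIV. a j ^ Poly_Mapping.lookup m j))
        = Poly_Mapping.single m' 1 * (qvar i - sc (a i)) + sc (a i) * (Poly_Mapping.single m' 1 - qconst (quat_of_real A'))"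
    proof -
      have c1: "Poly_Mapping.single m' 1 * sc (a i) = sc (a i) * Poly_Mapping.single m' 1"
        by (rule sc_central[symmetric])
      have c2: "sc (a i) * qconst (quat_of_real A') = qconst (quat_of_real (a i * A'))"
        by (simp add: sc_def qconst_mult quat_of_real_mult)
      show ?thesis
        unfolding prodm sm right_diff_distrib c1 c2 by simp
    qed
    also have "\<dots> \<in> J"
      using li_add[OF liJ] li_lmult[OF liJ] gen IH A'_def by simp
    finally show ?thesis .
  qed
qed

lemma poly_in_J:
  fixes a :: "('n::finite) \<Rightarrow> real" and p :: "'n qpoly"
  defines "J \<equiv> left_ideal_gen (range (\<lambda>i. qvar i - qconst (quat_of_real (a i))))"
  shows "p - qconst (\<Sum>m\<in>Poly_Mapping.keys p. Poly_Mapping.lookup p m * quat_of_real (\<Prod>i\<in>UNIV. a i ^ Poly_Mapping.lookup m i)) \<in> J"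
proof -
  have liJ: "left_ideal J" unfolding J_def by (rule left_ideal_gen_li)
  define A where "A m = quat_of_real (\<Prod>i\<in>UNIV. a i ^ Poly_Mapping.lookup m i)" for m :: "'n \<Rightarrow>\<^sub>0 nat"
  have "p - qconst (\<Sum>m\<in>Poly_Mapping.keys p. Poly_Mapping.lookup p m * A m)
      = (\<Sum>m\<in>Poly_Mapping.keys p. qconst (Poly_Mapping.lookup p m) * (Poly_Mapping.single m 1 - qconst (A m)))"
  proof -
    have "p = (\<Sum>m\<in>Poly_Mapping.keys p. qconst (Poly_Mapping.lookup p m) * Poly_Mapping.single m 1)"
      by (subst poly_mapping_expand) (simp add: qconst_single)
    moreover have "qconst (\<Sum>m\<in>Poly_Mapping.keys p. Poly_Mapping.lookup p m * A m)
        = (\<Sum>m\<in>Poly_Mapping.keys p. qconst (Poly_Mapping.lookup p m) * qconst (A m))"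
      by (simp add: qconst_sum qconst_mult)
    ultimately show ?thesis
      by (simp add: right_diff_distrib sum_subtractf)
  qed
  also have "\<dots> \<in> J"
    using mon_in_J[of _ a] li_lmult[OF liJ] unfolding J_def A_def
    by (intro li_sum[OF left_ideal_gen_li]) blast
  finally show ?thesis unfolding A_def .
qed

theorem proposition4p7:
  fixes M :: "('n::finite) qpoly set"
  assumes "two_sided_ideal M"
    and "maximal_left_ideal M"
  shows "\<exists>a :: 'n \<Rightarrow> real.
           M = left_ideal_gen (range (\<lambda>i. qvar i - qconst (quat_of_real (a i))))"
proof -
  have mM: "maxM M" using assms by (simp add: maxM_def)
  have li: "left_ideal M" using maxM.li[OF mM] .
  have "\<forall>i. \<exists>b. qvar i - sc b \<in> M"
  proof
    fix i :: 'n
    have cx: "\<And>y. qvar i * y = y * qvar i" by (rule qvar_central)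
    obtain q where "q \<noteq> 0" "phi (qvar i) q \<in> M" using algebraic[OF mM cx] by blast
    then show "\<exists>b. qvar i - sc b \<in> M" using root_step[OF mM cx] by blast
  qed
  then obtain a where a: "\<And>i. qvar i - sc (a i) \<in> M" by metis
  define J where "J = left_ideal_gen (range (\<lambda>i. qvar i - qconst (quat_of_real (a i))))"
  have "J \<subseteq> M"
    unfolding J_def left_ideal_gen_def
    by (rule hull_minimal) (use a li in \<open>auto simp: sc_def\<close>)
  moreover have "M \<subseteq> J"
  proof
    fix p assume "p \<in> M"
    define e where "e = (\<Sum>m\<in>Poly_Mapping.keys p. Poly_Mapping.lookup p m * quat_of_real (\<Prod>i\<in>UNIV. a i ^ Poly_Mapping.lookup m i))"
    have pJ: "p - qconst e \<in> J" unfolding J_def e_def by (rule poly_in_J)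
    then have "p - (p - qconst e) \<in> M" using \<open>J \<subseteq> M\<close> \<open>p \<in> M\<close> li_diff[OF li] by blast
    then have "qconst e \<in> M" by simp
    then have "e = 0" using nonzero_const[OF mM] by blast
    then show "p \<in> J" using pJ by (simp add: qconst_zero)
  qed
  ultimately show ?thesis unfolding J_def by blast
qed

end
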